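(* No minimally non-perfectly divisible graph contains a simplicial vertex.
   Context: All graphs are finite and simple. A vertex is simplicial if its neighbourhood is a clique. For $S\subseteq V(G)$, $G[S]$ is the subgraph induced by $S$. $\omega(G)$ is the number of vertices in a largest clique of $G$ and $\chi(G)$ the chromatic number. A graph $G$ is perfect if $\chi(H)=\omega(H)$ for every induced subgraph $H$ of $G$. A partition $(A,B)$ of $V(G)$ is good if $G[A]$ is perfect and $\omega(G[B])<\omega(G)$. A graph $G$ is perfectly divisible if every induced subgraph $H$ of $G$ with at least one edge admits a good partition (of $V(H)$). A graph is minimally non-perfectly divisible if it is not perfectly divisible but each of its proper induced subgraphs is perfectly divisible. *)

theory Defs
  imports Main
begin

text \<open>The induced subgraph G[S] (S \<subseteq> V) is
represented by the vertex set S with the same relation E.\<close>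

definition graph :: "'a set \<Rightarrow> ('a \<Rightarrow> 'a \<Rightarrow> bool) \<Rightarrow> bool" where
  "graph V E \<longleftrightarrow> finite V \<and> (\<forall>x y. E x y \<longrightarrow> E y x) \<and> (\<forall>x. \<not> E x x)"

definition clique :: "('a \<Rightarrow> 'a \<Rightarrow> bool) \<Rightarrow> 'a set \<Rightarrow> bool" where
  "clique E K \<longleftrightarrow> (\<forall>x\<in>K. \<forall>y\<in>K. x \<noteq> y \<longrightarrow> E x y)"

definition omega :: "('a \<Rightarrow> 'a \<Rightarrow> bool) \<Rightarrow> 'a set \<Rightarrow> nat" where
  "omega E S = Max {card K | K. K \<subseteq> S \<and> clique E K}"

definition proper_colouring :: "('a \<Rightarrow> 'a \<Rightarrow> bool) \<Rightarrow> 'a set \<Rightarrow> nat \<Rightarrow> ('a \<Rightarrow> nat) \<Rightarrow> bool" where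
  "proper_colouring E S k f \<longleftrightarrow> f ` S \<subseteq> {..<k} \<and> (\<forall>x\<in>S. \<forall>y\<in>S. E x y \<longrightarrow> f x \<noteq> f y)"

definition chi :: "('a \<Rightarrow> 'a \<Rightarrow> bool) \<Rightarrow> 'a set \<Rightarrow> nat" where
  "chi E S = (LEAST k. \<exists>f. proper_colouring E S k f)"

definition perfect :: "('a \<Rightarrow> 'a \<Rightarrow> bool) \<Rightarrow> 'a set \<Rightarrow> bool" where
  "perfect E S \<longleftrightarrow> (\<forall>T\<subseteq>S. chi E T = omega E T)"

definition good_partition :: "('a \<Rightarrow> 'a \<Rightarrow> bool) \<Rightarrow> 'a set \<Rightarrow> 'a set \<Rightarrow> 'a set \<Rightarrow> bool" where
  "good_partition E S A B \<longleftrightarrow> A \<union> B = S \<and> A \<inter> B = {} \<and> perfect E A \<and> omega E B < omega E S"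

definition has_edge :: "('a \<Rightarrow> 'a \<Rightarrow> bool) \<Rightarrow> 'a set \<Rightarrow> bool" where
  "has_edge E S \<longleftrightarrow> (\<exists>x\<in>S. \<exists>y\<in>S. E x y)"

definition perfectly_divisible :: "('a \<Rightarrow> 'a \<Rightarrow> bool) \<Rightarrow> 'a set \<Rightarrow> bool" where
  "perfectly_divisible E S \<longleftrightarrow> (\<forall>T\<subseteq>S. has_edge E T \<longrightarrow> (\<exists>A B. good_partition E T A B))"

definition minimally_non_pd :: "('a \<Rightarrow> 'a \<Rightarrow> bool) \<Rightarrow> 'a set \<Rightarrow> bool" where
  "minimally_non_pd E S \<longleftrightarrow> \<not> perfectly_divisible E S \<and> (\<forall>T. T \<subset> S \<longrightarrow> perfectly_divisible E T)"

definition simplicial :: "('a \<Rightarrow> 'a \<Rightarrow> bool) \<Rightarrow> 'a set \<Rightarrow> 'a \<Rightarrow> bool" where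
  "simplicial E S v \<longleftrightarrow> v \<in> S \<and> clique E {u \<in> S. E v u}"

end

theory Submission
  imports Defs
begin

lemma omega_fin:
  assumes "finite S"
  shows "finite {card K | K. K \<subseteq> S \<and> clique E K}"
proof -
  have "{card K | K. K \<subseteq> S \<and> clique E K} \<subseteq> card ` Pow S" by auto
  thus ?thesis using assms finite_subset by blast
qed

lemma omega_ge:
  assumes "finite S" "K \<subseteq> S" "clique E K"
  shows "card K \<le> omega E S"
  unfolding omega_def using omega_fin[OF assms(1), of E] assms
  by (intro Max_ge) auto

lemma omega_obtain:
  assumes "finite S"
  obtains K where "K \<subseteq> S" "clique E K" "card K = omega E S"
proof -
  have ne: "{card K | K. K \<subseteq> S \<and> clique E K} \<noteq> {}"
  proof -
    have "card {} \<in> {card K | K. K \<subseteq> S \<and> clique E K}"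
      by (rule CollectI, rule exI[of _ "{}"]) (simp add: clique_def)
    thus ?thesis by blast
  qed
  show ?thesis using Max_in[OF omega_fin[OF assms, of E] ne] that unfolding omega_def by auto
qed

lemma omega_mono:
  assumes "finite S'" "S \<subseteq> S'"
  shows "omega E S \<le> omega E S'"
proof -
  have "finite S" using assms finite_subset by blast
  then obtain K where "K \<subseteq> S" "clique E K" "card K = omega E S" by (rule omega_obtain)
  thus ?thesis using omega_ge[OF assms(1), of K E] assms(2) by auto
qed

lemma colouring_card:
  assumes "proper_colouring E S k f" "clique E K" "K \<subseteq> S" "finite K"
  shows "card K \<le> k"
proof -
  have inj: "inj_on f K"
    using assms unfolding inj_on_def proper_colouring_def clique_def by blast
  have "f ` K \<subseteq> {..<k}" using assms unfolding proper_colouring_def by blast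
  hence "card (f ` K) \<le> k" by (metis card_lessThan card_mono finite_lessThan)
  thus ?thesis using card_image[OF inj] by simp
qed

lemma colouring_omega:
  assumes "proper_colouring E S k f" "finite S"
  shows "omega E S \<le> k"
proof -
  obtain K where "K \<subseteq> S" "clique E K" "card K = omega E S" using omega_obtain[OF assms(2)] .
  thus ?thesis using colouring_card[OF assms(1)] assms(2) finite_subset by metis
qed

lemma colouring_exists:
  assumes "finite S" "\<And>x. \<not> E x x"
  shows "\<exists>k f. proper_colouring E S k f"
proof -
  obtain h where "bij_betw h S {0..<card S}" using ex_bij_betw_finite_nat[OF assms(1)] by blast
  hence "proper_colouring E S (card S) h"
    using assms(2) unfolding proper_colouring_def bij_betw_def inj_on_def by fastforce
  thus ?thesis by blast
qed

lemma chi_colouring: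
  assumes "finite S" "\<And>x. \<not> E x x"
  shows "proper_colouring E S (chi E S) (SOME f. proper_colouring E S (chi E S) f)"
proof -
  have "\<exists>f. proper_colouring E S (chi E S) f"
    unfolding chi_def using colouring_exists[OF assms] by (rule LeastI_ex)
  thus ?thesis by (rule someI_ex)
qed

lemma perfect_insert:
  assumes g: "graph V E" and AV: "A \<subseteq> V" and vV: "v \<in> V"
    and p: "perfect E A" and cl: "clique E {u \<in> A. E v u}"
  shows "perfect E (insert v A)"
  unfolding perfect_def
proof (intro allI impI)
  fix T assume T: "T \<subseteq> insert v A"
  have finV: "finite V" using g unfolding graph_def by blast
  have finT: "finite T" using T AV vV finV finite_subset by blast
  have irr: "\<And>x. \<not> E x x" using g unfolding graph_def by blast
  show "chi E T = omega E T"
  proof (cases "v \<in> T")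
    case False
    thus ?thesis using T p unfolding perfect_def by blast
  next
    case True
    define T0 where "T0 = T - {v}"
    have T0A: "T0 \<subseteq> A" using T T0_def by blast
    have finT0: "finite T0" using finT T0_def by blast
    have c0: "chi E T0 = omega E T0" using p T0A unfolding perfect_def by blast
    define f where "f = (SOME f. proper_colouring E T0 (chi E T0) f)"
    have pf: "proper_colouring E T0 (omega E T0) f"
      using chi_colouring[of T0 E, OF finT0 irr] c0 unfolding f_def by simp
    define k where "k = omega E T"
    have k0: "omega E T0 \<le> k" unfolding k_def using omega_mono[OF finT] T0_def by blast
    define N where "N = {u \<in> T0. E v u}"
    have vN: "v \<notin> N" unfolding N_def T0_def by blast
    have symE: "\<And>x y. E x y \<Longrightarrow> E y x" using g unfolding graph_def by blast
    have clN: "clique E (insert v N)"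
      using cl symE unfolding clique_def N_def using T0A by blast
    have finN: "finite N" using finT0 N_def by simp
    have "card (insert v N) \<le> k" unfolding k_def
      using omega_ge[OF finT, of "insert v N" E] clN True N_def T0_def by blast
    hence cN: "card N < k" using vN finN by simp
    have "card (f ` N) < k" using cN card_image_le[OF finN, of f] by linarith
    hence "\<not> ({..<k} \<subseteq> f ` N)"
      by (metis card_lessThan card_mono finite_imageI finN not_le)
    then obtain c where c: "c < k" "c \<notin> f ` N" by blast
    define g' where "g' = f(v := c)"
    have pg: "proper_colouring E T k g'"
      unfolding proper_colouring_def
    proof (intro conjI ballI impI)
      show "g' ` T \<subseteq> {..<k}"
      proof
        fix y assume "y \<in> g' ` T"
        then obtain x where x: "x \<in> T" "y = g' x" by blast
        show "y \<in> {..<k}"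
        proof (cases "x = v")
          case True thus ?thesis using x c g'_def by simp
        next
          case False
          hence "x \<in> T0" using x T0_def by blast
          hence "f x < omega E T0" using pf unfolding proper_colouring_def by blast
          thus ?thesis using x False k0 g'_def by simp
        qed
      qed
    next
      fix x y assume xy: "x \<in> T" "y \<in> T" "E x y"
      show "g' x \<noteq> g' y"
      proof (cases "x = v")
        case True
        hence "y \<noteq> v" using xy irr by blast
        hence "y \<in> N" using xy True N_def T0_def by blast
        thus ?thesis using True \<open>y \<noteq> v\<close> c g'_def by auto
      next
        case False
        show ?thesis
        proof (cases "y = v")
          case True
          hence "x \<in> N" using xy False N_def T0_def symE by blast
          thus ?thesis using True False c g'_def by auto
        next
          case False2: False
          have "x \<in> T0" "y \<in> T0" using xy False False2 T0_def by auto
          hence "f x \<noteq> f y" using pf xy unfolding proper_colouring_def by blast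
          thus ?thesis using False False2 g'_def by simp
        qed
      qed
    qed
    have le: "chi E T \<le> k" unfolding chi_def using pg by (intro Least_le) blast
    have ge: "k \<le> chi E T" unfolding k_def
      using colouring_omega[OF chi_colouring[of T E, OF finT irr] finT] .
    show ?thesis using le ge k_def by simp
  qed
qed

lemma perfect_empty: "perfect E {}"
proof -
  have "chi E {} = 0" unfolding chi_def
    by (rule Least_eq_0) (auto simp: proper_colouring_def)
  moreover have "omega E {} = 0" unfolding omega_def
  proof -
    have "{card K | K. K \<subseteq> {} \<and> clique E K} = {0}" by (auto simp: clique_def)
    thus "Max {card K | K. K \<subseteq> {} \<and> clique E K} = 0" by simp
  qed
  ultimately show ?thesis unfolding perfect_def by auto
qed

theorem lemma3:
  fixes V :: "'a set" and E :: "'a \<Rightarrow> 'a \<Rightarrow> bool"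
  assumes "graph V E"
    and "minimally_non_pd E V"
  shows "\<not> (\<exists>v. simplicial E V v)"
proof
  assume "\<exists>v. simplicial E V v"
  then obtain v where vV: "v \<in> V" and cl: "clique E {u \<in> V. E v u}"
    unfolding simplicial_def by blast
  have finV: "finite V" using assms(1) unfolding graph_def by blast
  have irr: "\<And>x. \<not> E x x" using assms(1) unfolding graph_def by blast
  obtain T where T: "T \<subseteq> V" "has_edge E T" "\<not> (\<exists>A B. good_partition E T A B)"
    using assms(2) unfolding minimally_non_pd_def perfectly_divisible_def by blast
  have TV: "T = V"
  proof (rule ccontr)
    assume "T \<noteq> V"
    hence "perfectly_divisible E T" using T(1) assms(2) unfolding minimally_non_pd_def by blast
    thus False using T unfolding perfectly_divisible_def by blast
  qed
  define V' where "V' = V - {v}"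
  have pdV': "perfectly_divisible E V'"
    using assms(2) vV unfolding minimally_non_pd_def V'_def by blast
  have finV': "finite V'" using finV V'_def by simp
  have om': "omega E V' \<le> omega E V" using omega_mono[OF finV] V'_def by blast
  obtain x y where xy: "x \<in> V" "y \<in> V" "E x y" using T TV unfolding has_edge_def by blast
  have "x \<noteq> y" using xy irr by blast
  hence "card {x, y} = 2" by simp
  moreover have "clique E {x, y}" using xy assms(1) unfolding clique_def graph_def by blast
  ultimately have om2: "2 \<le> omega E V" using omega_ge[OF finV, of "{x,y}" E] xy by auto
  show False
  proof (cases "has_edge E V'")
    case True
    then obtain A B where gp: "good_partition E V' A B"
      using pdV' unfolding perfectly_divisible_def by blast
    have AV: "A \<subseteq> V" using gp unfolding good_partition_def V'_def by blast
    have "clique E {u \<in> A. E v u}" using cl AV unfolding clique_def by blast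
    hence "perfect E (insert v A)" using perfect_insert[OF assms(1) AV vV] gp
      unfolding good_partition_def by blast
    hence "good_partition E V (insert v A) B"
      using gp om' vV unfolding good_partition_def V'_def by auto
    thus False using T TV by blast
  next
    case False
    have "omega E V' \<le> 1"
    proof -
      obtain K where K: "K \<subseteq> V'" "clique E K" "card K = omega E V'"
        using omega_obtain[OF finV'] .
      have "finite K" using K finV' finite_subset by blast
      moreover have "\<forall>a\<in>K. \<forall>b\<in>K. a = b"
        using K False unfolding clique_def has_edge_def by blast
      ultimately have "card K \<le> Suc 0" using card_le_Suc0_iff_eq by blast
      thus ?thesis using K by simp
    qed
    moreover have "perfect E {v}"
      using perfect_insert[OF assms(1) _ vV perfect_empty] by (simp add: clique_def)
    ultimately have "good_partition E V {v} V'"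
      using om2 vV unfolding good_partition_def V'_def by auto
    thus False using T TV by blast
  qed
qed

end
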